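(* Let $(\mathcal{A},\varphi)$ be a tracial noncommutative probability space with universal enveloping traffic space $(\mathcal{B},\psi)$, and let $t\in\Theta(\mathcal{B})$ be (the class of) a graph monomial such that either $v_{\mathrm{in}}=v_{\mathrm{out}}$ or some simple cycle of its underlying undirected multigraph passes through both $v_{\mathrm{in}}$ and $v_{\mathrm{out}}$. Then $t\equiv\Delta(t)\pmod\psi$.
   Context: $(\mathcal{A},\varphi)$: unital complex algebra with unital tracial linear functional; free cumulants $\kappa_n$ determined by $\varphi(a_1\cdots a_n)=\sum_{\pi\in NC(n)}\prod_{B\in\pi}\kappa_{|B|}[(a_i)_{i\in B}]$. A graph monomial in $\mathcal{A}$ is a finite connected directed multigraph (loops, parallel edges allowed) with distinguished, not necessarily distinct, vertices $v_{\mathrm{in}},v_{\mathrm{out}}$ and edge labels in $\mathcal{A}$, up to isomorphism. $\iota(a)$: two vertices, one edge from $v_{\mathrm{in}}$ to $v_{\mathrm{out}}$ labelled $a$. Substitution $Z_g(t_1,\dots,t_K)$ for a connected bi-rooted multidigraph $g$ with ordered edges $e_1,\dots,e_K$ replaces each $e_i$ by a copy of $t_i$, identifying $\mathrm{src}(e_i)$ with the input and $\mathrm{tgt}(e_i)$ with the output of $t_i$; the product $t_1t_2$ identifies the input of $t_1$ with the output of $t_2$ (output of $t_1$, input of $t_2$ become output, input). $\mathcal{B}=\mathcal{G}(\mathcal{A})$ is the span of graph monomials modulo the span of $Z_g(\iota(a_1),\dots,\iota(a_K))-Z_g(P(\iota(b_1),\dots,\iota(b_n)),\iota(a_2),\dots)$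 (any edge position) for $a_1=P(b_1,\dots,b_n)$, $P$ a noncommutative polynomial. $\Delta(t)$ is the graph monomial obtained from $t$ by identifying $v_{\mathrm{in}}$ and $v_{\mathrm{out}}$ (the merged vertex being both input and output). $\Theta(\mathcal{B})$ is the span of classes of graph monomials with $v_{\mathrm{in}}=v_{\mathrm{out}}$ or with a simple cycle through both $v_{\mathrm{in}}$ and $v_{\mathrm{out}}$. A test graph is a finite connected directed multigraph with labels in $\mathcal{A}$; $T^\pi$ identifies vertices in blocks of a partition $\pi$. Cactus: connected multigraph with each edge in exactly one simple cycle (loops, pairs of parallel edges count); pads = these cycles; oriented cactus: every pad directed. $\tau^0_\varphi[T]=\prod_{C\in\mathrm{Pads}(T)}\kappa_{n_C}[\gamma(e_1),\dots,\gamma(e_{n_C})]$ for oriented cacti (edges listed with $\mathrm{src}(e_i)=\mathrm{tgt}(e_{i+1})$, indices mod $n_C$), else $0$; $\tau_\varphi[T]=\sum_\pi\tau^0_\varphi[T^\pi]$ over partitions of the vertex set. $\psi(t)=\tau_\varphi[\tilde\Delta(t)]$ where $\tilde\Delta(t)$ identifies input and output and forgets roots. $s\equiv t\pmod\psi$ means $\psi((s-t)u)=0$ for all $u\in\mathcal{B}$. *)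

theory Defs
  imports Complex_Main "HOL-Library.Disjoint_Sets"
begin

text \<open>A unital complex algebra is modelled as a type of class ring_1 together with a
 unital ring homomorphism c from the complex numbers into the centre (scalar z acts as c z * a).\<close>

definition complex_algebra_str :: "(complex \<Rightarrow> 'a::ring_1) \<Rightarrow> bool" where
  "complex_algebra_str c \<longleftrightarrow>
     c 1 = 1 \<and> (\<forall>z w. c (z + w) = c z + c w) \<and> (\<forall>z w. c (z * w) = c z * c w)
     \<and> (\<forall>z a. c z * a = a * c z)"

definition tracial_ncps :: "(complex \<Rightarrow> 'a::ring_1) \<Rightarrow> ('a \<Rightarrow> complex) \<Rightarrow> bool" where
  "tracial_ncps c phi \<longleftrightarrow>
     complex_algebra_str c \<and>
     (\<forall>a b. phi (a + b) = phi a + phi b) \<and> (\<forall>z a. phi (c z * a) = z * phi a) \<and>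
     phi 1 = 1 \<and> (\<forall>a b. phi (a * b) = phi (b * a))"

definition NC :: "nat \<Rightarrow> nat set set set" where
  "NC n = {P. partition_on {0..<n} P \<and>
     (\<forall>B1\<in>P. \<forall>B2\<in>P. B1 \<noteq> B2 \<longrightarrow>
        \<not> (\<exists>a b c d. a < b \<and> b < c \<and> c < d \<and> a \<in> B1 \<and> c \<in> B1 \<and> b \<in> B2 \<and> d \<in> B2))}"

text \<open>kappa xs = kappa_n[x_1,...,x_n]; the free cumulants are determined by the
 moment-cumulant formula.\<close>
definition free_cumulants :: "('a::ring_1 \<Rightarrow> complex) \<Rightarrow> ('a list \<Rightarrow> complex) \<Rightarrow> bool" where
  "free_cumulants phi kappa \<longleftrightarrow>
     (\<forall>xs. phi (prod_list xs) =
        (\<Sum>P\<in>NC (length xs). \<Prod>B\<in>P. kappa (map (\<lambda>i. xs ! i) (sorted_list_of_set B))))"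

text \<open>A directed multigraph: vertex set and a list of edges (source, label, target);
 edges are identified by their index in the list.\<close>
datatype ('v, 'a) tgraph = TG (verts: "'v set") (edges: "('v \<times> 'a \<times> 'v) list")

datatype ('v, 'a) gmon = GM (graph: "('v, 'a) tgraph") (vin: 'v) (vout: 'v)

definition esrc :: "'v \<times> 'a \<times> 'v \<Rightarrow> 'v" where "esrc e = fst e"
definition elab :: "'v \<times> 'a \<times> 'v \<Rightarrow> 'a" where "elab e = fst (snd e)"
definition etgt :: "'v \<times> 'a \<times> 'v \<Rightarrow> 'v" where "etgt e = snd (snd e)"

definition adj :: "('v, 'a) tgraph \<Rightarrow> ('v \<times> 'v) set" where
  "adj T = {(esrc e, etgt e) | e. e \<in> set (edges T)} \<union> {(etgt e, esrc e) | e. e \<in> set (edges T)}"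

definition test_graph :: "('v, 'a) tgraph \<Rightarrow> bool" where
  "test_graph T \<longleftrightarrow> finite (verts T) \<and> verts T \<noteq> {} \<and>
     (\<forall>e\<in>set (edges T). esrc e \<in> verts T \<and> etgt e \<in> verts T) \<and>
     (\<forall>x\<in>verts T. \<forall>y\<in>verts T. (x, y) \<in> (adj T)\<^sup>*)"

definition graph_monomial :: "('v, 'a) gmon \<Rightarrow> bool" where
  "graph_monomial M \<longleftrightarrow> test_graph (graph M) \<and> vin M \<in> verts (graph M) \<and> vout M \<in> verts (graph M)"

definition map_tg :: "('v \<Rightarrow> 'w) \<Rightarrow> ('v, 'a) tgraph \<Rightarrow> ('w, 'a) tgraph" where
  "map_tg f T = TG (f ` verts T) (map (\<lambda>(s, a, t). (f s, a, f t)) (edges T))"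

definition tg_union :: "('v, 'a) tgraph \<Rightarrow> ('v, 'a) tgraph \<Rightarrow> ('v, 'a) tgraph" where
  "tg_union T1 T2 = TG (verts T1 \<union> verts T2) (edges T1 @ edges T2)"

text \<open>Simple cycles of the underlying undirected multigraph: distinct edge indices es,
 distinct vertices ws, edge es!i joining ws!i and ws!(i+1 mod n) (either orientation).
 n = 1 is a loop, n = 2 a pair of parallel edges.\<close>
definition simple_cycle :: "('v, 'a) tgraph \<Rightarrow> nat list \<Rightarrow> 'v list \<Rightarrow> bool" where
  "simple_cycle T es ws \<longleftrightarrow> (let n = length es in
     n \<ge> 1 \<and> length ws = n \<and> distinct es \<and> distinct ws \<and>
     (\<forall>i<n. es ! i < length (edges T) \<and>
        (let e = edges T ! (es ! i) in
          (esrc e = ws ! i \<and> etgt e = ws ! ((i + 1) mod n)) \<or>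
          (etgt e = ws ! i \<and> esrc e = ws ! ((i + 1) mod n)))))"

definition pads :: "('v, 'a) tgraph \<Rightarrow> nat set set" where
  "pads T = {set es | es ws. simple_cycle T es ws}"

definition is_cactus :: "('v, 'a) tgraph \<Rightarrow> bool" where
  "is_cactus T \<longleftrightarrow> test_graph T \<and> (\<forall>i<length (edges T). \<exists>!C. C \<in> pads T \<and> i \<in> C)"

definition directed_listing :: "('v, 'a) tgraph \<Rightarrow> nat set \<Rightarrow> nat list \<Rightarrow> bool" where
  "directed_listing T C es \<longleftrightarrow> distinct es \<and> set es = C \<and>
     (\<forall>i<length es. esrc (edges T ! (es ! i)) = etgt (edges T ! (es ! ((i + 1) mod length es))))"

definition oriented_cactus :: "('v, 'a) tgraph \<Rightarrow> bool" where
  "oriented_cactus T \<longleftrightarrow> is_cactus T \<and> (\<forall>C\<in>pads T. \<exists>es. directed_listing T C es)"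

definition tau0 :: "('a list \<Rightarrow> complex) \<Rightarrow> ('v, 'a) tgraph \<Rightarrow> complex" where
  "tau0 kappa T = (if oriented_cactus T then
      (\<Prod>C\<in>pads T. kappa (map (\<lambda>i. elab (edges T ! i)) (SOME es. directed_listing T C es)))
    else 0)"

definition block_of :: "'v set set \<Rightarrow> 'v \<Rightarrow> 'v set" where
  "block_of P x = (THE B. B \<in> P \<and> x \<in> B)"

definition quot_tg :: "('v, 'a) tgraph \<Rightarrow> 'v set set \<Rightarrow> ('v set, 'a) tgraph" where
  "quot_tg T P = map_tg (block_of P) T"

definition tau :: "('a list \<Rightarrow> complex) \<Rightarrow> ('v, 'a) tgraph \<Rightarrow> complex" where
  "tau kappa T = (\<Sum>P\<in>{P. partition_on (verts T) P}. tau0 kappa (quot_tg T P))"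

definition merge_io :: "(nat, 'a) gmon \<Rightarrow> nat \<Rightarrow> nat" where
  "merge_io M v = (if v = vout M then vin M else v)"

definition Delta :: "(nat, 'a) gmon \<Rightarrow> (nat, 'a) gmon" where
  "Delta M = GM (map_tg (merge_io M) (graph M)) (vin M) (vin M)"

definition Delta_tilde :: "(nat, 'a) gmon \<Rightarrow> (nat, 'a) tgraph" where
  "Delta_tilde M = map_tg (merge_io M) (graph M)"

text \<open>Product t1 t2: disjoint union, input of t1 identified with output of t2;
 output of t1 is the output, input of t2 is the input.\<close>
definition gm_mult :: "(nat, 'a) gmon \<Rightarrow> (nat, 'a) gmon \<Rightarrow> (nat, 'a) gmon" where
  "gm_mult M N = (let h = (\<lambda>w. if w = 2 * vin M then 2 * vout N + 1 else w) in
     GM (map_tg h (tg_union (map_tg (\<lambda>v. 2 * v) (graph M)) (map_tg (\<lambda>v. 2 * v + 1) (graph N))))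
        (2 * vin N + 1) (h (2 * vout M)))"

definition psi :: "('a list \<Rightarrow> complex) \<Rightarrow> (nat, 'a) gmon \<Rightarrow> complex" where
  "psi kappa M = tau kappa (Delta_tilde M)"

definition in_Theta :: "('v, 'a) gmon \<Rightarrow> bool" where
  "in_Theta M \<longleftrightarrow> vin M = vout M \<or>
     (\<exists>es ws. simple_cycle (graph M) es ws \<and> vin M \<in> set ws \<and> vout M \<in> set ws)"

end

theory Submission
  imports Defs
begin

definition joins :: "('v, 'a) tgraph \<Rightarrow> nat \<Rightarrow> 'v \<Rightarrow> 'v \<Rightarrow> bool" where
  "joins T k p q \<longleftrightarrow> (esrc (edges T ! k) = p \<and> etgt (edges T ! k) = q) \<or>
                       (etgt (edges T ! k) = p \<and> esrc (edges T ! k) = q)"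

definition walk :: "('v, 'a) tgraph \<Rightarrow> 'v list \<Rightarrow> nat list \<Rightarrow> bool" where
  "walk T vs es \<longleftrightarrow> length vs = Suc (length es) \<and>
     (\<forall>i<length es. es ! i < length (edges T) \<and> joins T (es ! i) (vs ! i) (vs ! Suc i))"

lemma walk_single[simp]: "walk T [v] []" by (simp add: walk_def)

lemma walk_Nil_iff: "walk T vs [] \<longleftrightarrow> (\<exists>v. vs = [v])"
  by (auto simp: walk_def length_Suc_conv)

lemma walk_Cons: "walk T (v # w # vs) (e # es) \<longleftrightarrow>
   e < length (edges T) \<and> joins T e v w \<and> walk T (w # vs) es"
  by (auto simp: walk_def All_less_Suc2)

lemma walk_ConsE:
  assumes "walk T vs (e # es)"
  obtains v w vs' where "vs = v # w # vs'" "e < length (edges T)" "joins T e v w" "walk T (w # vs') es"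
proof -
  from assms have "length vs = Suc (Suc (length es))" by (simp add: walk_def)
  then obtain v w vs' where "vs = v # w # vs'" by (metis length_Suc_conv)
  with assms walk_Cons that show ?thesis by metis
qed

lemma walk_nonempty: "walk T vs es \<Longrightarrow> vs \<noteq> []"
  by (auto simp: walk_def)

lemma walk_append:
  "walk T vs es \<Longrightarrow> walk T ws fs \<Longrightarrow> last vs = hd ws \<Longrightarrow> walk T (vs @ tl ws) (es @ fs)"
proof (induction es arbitrary: vs)
  case Nil
  then obtain v where "vs = [v]" by (auto simp: walk_Nil_iff)
  with Nil show ?case using walk_nonempty[OF Nil(2)] by (cases ws) auto
next
  case (Cons e es)
  from Cons.prems(1) obtain v w vs' where vs: "vs = v # w # vs'" "e < length (edges T)" "joins T e v w" "walk T (w # vs') es"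
    by (rule walk_ConsE)
  have "last (w # vs') = hd ws" using Cons.prems(3) vs(1) by simp
  then have "walk T ((w # vs') @ tl ws) (es @ fs)" using Cons.IH[OF vs(4)] Cons.prems(2) by simp
  then show ?case using vs by (simp add: walk_Cons)
qed

lemma walk_endpoints:
  "walk T vs es \<Longrightarrow> k \<in> set es \<Longrightarrow> esrc (edges T ! k) \<in> set vs \<and> etgt (edges T ! k) \<in> set vs"
proof (induction es arbitrary: vs)
  case Nil then show ?case by simp
next
  case (Cons e es)
  from Cons.prems(1) obtain v w vs' where vs: "vs = v # w # vs'" "e < length (edges T)" "joins T e v w" "walk T (w # vs') es"
    by (rule walk_ConsE)
  show ?case
  proof (cases "k = e")
    case True then show ?thesis using vs by (auto simp: joins_def)
  next
    case False
    then have "k \<in> set es" using Cons.prems by simp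
    from Cons.IH[OF vs(4) this] show ?thesis using vs by auto
  qed
qed

lemma walk_hd_last_tl:
  "walk T vs es \<Longrightarrow> x \<in> set vs \<Longrightarrow> x \<noteq> last vs \<Longrightarrow>
   \<exists>vs' es'. walk T vs' es' \<and> hd vs' = x \<and> last vs' = last vs \<and> x \<notin> set (tl vs') \<and> set es' \<subseteq> set es"
proof (induction es arbitrary: vs)
  case Nil then show ?case by (auto simp: walk_Nil_iff)
next
  case (Cons e es)
  from Cons.prems(1) obtain v w vs' where vs: "vs = v # w # vs'" "e < length (edges T)" "joins T e v w" "walk T (w # vs') es"
    by (rule walk_ConsE)
  show ?case
  proof (cases "x \<in> set (w # vs')")
    case True
    have "x \<noteq> last (w # vs')" using Cons.prems vs by simp
    from Cons.IH[OF vs(4) True this] obtain vs2 es2 where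
      "walk T vs2 es2" "hd vs2 = x" "last vs2 = last (w # vs')" "x \<notin> set (tl vs2)" "set es2 \<subseteq> set es"
      by blast
    then show ?thesis using vs by (intro exI[of _ vs2] exI[of _ es2]) auto
  next
    case False
    then have "x = v" using Cons.prems vs by auto
    then show ?thesis using False Cons.prems vs by (intro exI[of _ vs] exI[of _ "e # es"]) auto
  qed
qed

lemma walk_drop:
  assumes "walk T ps fs" "k \<le> length fs"
  shows "walk T (drop k ps) (drop k fs)"
proof -
  have len: "length ps = Suc (length fs)" using assms(1) by (simp add: walk_def)
  show ?thesis unfolding walk_def
  proof (rule conjI)
    show "length (drop k ps) = Suc (length (drop k fs))" using len assms(2) by simp
  next
    show "\<forall>i<length (drop k fs). drop k fs ! i < length (edges T) \<and> joins T (drop k fs ! i) (drop k ps ! i) (drop k ps ! Suc i)"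
    proof (intro allI impI)
    fix i assume "i < length (drop k fs)"
    then have i: "k + i < length fs" by simp
    then have "fs ! (k + i) < length (edges T) \<and> joins T (fs ! (k + i)) (ps ! (k + i)) (ps ! Suc (k + i))"
      using assms(1) unfolding walk_def by blast
    then show "drop k fs ! i < length (edges T) \<and> joins T (drop k fs ! i) (drop k ps ! i) (drop k ps ! Suc i)"
      using i len assms(2) by simp
  qed
  qed
qed

lemma walk_path:
  "walk T vs es \<Longrightarrow> \<exists>vs' es'. walk T vs' es' \<and> hd vs' = hd vs \<and> last vs' = last vs \<and> distinct vs' \<and> set es' \<subseteq> set es"
proof (induction es arbitrary: vs)
  case Nil then show ?case by (intro exI[of _ vs] exI[of _ "[]"]) (auto simp: walk_Nil_iff)
next
  case (Cons e es)
  from Cons.prems(1) obtain v w vs' where vs: "vs = v # w # vs'" "e < length (edges T)" "joins T e v w" "walk T (w # vs') es"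
    by (rule walk_ConsE)
  from Cons.IH[OF vs(4)] obtain ps fs where ps: "walk T ps fs" "hd ps = hd (w # vs')" "last ps = last (w # vs')" "distinct ps" "set fs \<subseteq> set es"
    by blast
  have psne: "ps \<noteq> []" using walk_nonempty[OF ps(1)] .
  have lastvs: "last vs = last ps" using ps(3) vs(1) by simp
  show ?case
  proof (cases "v \<in> set ps")
    case False
    obtain ps' where pse: "ps = w # ps'" using psne ps(2) by (cases ps) auto
    have w1: "walk T (v # ps) (e # fs)" using pse ps(1) vs(2,3) by (simp add: walk_Cons)
    have "last (v # ps) = last vs" using lastvs psne by simp
    moreover have "distinct (v # ps)" using False ps(4) by simp
    moreover have "set (e # fs) \<subseteq> set (e # es)" using ps(5) by auto
    ultimately show ?thesis using w1 vs(1) by (intro exI[of _ "v # ps"] exI[of _ "e # fs"]) simp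
  next
    case True
    then obtain k where k: "k < length ps" "ps ! k = v" by (metis in_set_conv_nth)
    have lens: "length ps = Suc (length fs)" using ps(1) by (simp add: walk_def)
    have "walk T (drop k ps) (drop k fs)" using ps(1) k lens by (intro walk_drop) auto
    moreover have "hd (drop k ps) = hd vs" using k vs(1) by (simp add: hd_drop_conv_nth)
    moreover have "last (drop k ps) = last vs" using k lastvs by simp
    moreover have "distinct (drop k ps)" using ps(4) by simp
    moreover have "set (drop k fs) \<subseteq> set (e # es)" using ps(5) set_drop_subset[of k fs] by auto
    ultimately show ?thesis by blast
  qed
qed

lemma walk_distinct_edges: "walk T vs es \<Longrightarrow> distinct vs \<Longrightarrow> distinct es"
proof (induction es arbitrary: vs)
  case Nil then show ?case by simp
next
  case (Cons e es)
  from Cons.prems(1) obtain v w vs' where vs: "vs = v # w # vs'" "e < length (edges T)" "joins T e v w" "walk T (w # vs') es"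
    by (rule walk_ConsE)
  have d: "distinct (w # vs')" using Cons.prems(2) vs(1) by simp
  have "e \<notin> set es"
  proof
    assume "e \<in> set es"
    from walk_endpoints[OF vs(4) this] have "v \<in> set (w # vs')" using vs(3) unfolding joins_def by auto
    then show False using Cons.prems(2) vs(1) by simp
  qed
  then show ?case using Cons.IH[OF vs(4) d] by simp
qed

lemma walk_last_edge:
  assumes "walk T vs es" "es \<noteq> []"
  shows "esrc (edges T ! last es) = last vs \<or> etgt (edges T ! last es) = last vs"
proof -
  have len: "length vs = Suc (length es)" using assms(1) by (simp add: walk_def)
  define i where "i = length es - 1"
  have i: "i < length es" "Suc i = length es" using assms(2) by (auto simp: i_def)
  have "joins T (es ! i) (vs ! i) (vs ! Suc i)" using assms(1) i(1) by (simp add: walk_def)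
  moreover have "last es = es ! i" using assms(2) by (simp add: last_conv_nth i_def)
  moreover have "last vs = vs ! Suc i" using len i by (subst last_conv_nth) auto
  ultimately show ?thesis by (auto simp: joins_def)
qed

lemma simple_cycle_iff:
  "simple_cycle T es ws \<longleftrightarrow> length es \<ge> 1 \<and> length ws = length es \<and> distinct es \<and> distinct ws \<and>
     (\<forall>i<length es. es ! i < length (edges T) \<and> joins T (es ! i) (ws ! i) (ws ! ((i + 1) mod length es)))"
  by (simp add: simple_cycle_def joins_def Let_def)

lemma cycle_from_path:
  assumes e: "e < length (edges T)" "joins T e p q" and pq: "p \<noteq> q"
    and w: "walk T vs fs" "hd vs = q" "last vs = p" "distinct vs" and ne: "e \<notin> set fs"
  shows "simple_cycle T (e # fs) (p # butlast vs)"
proof -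
  have len: "length vs = Suc (length fs)" using w(1) by (simp add: walk_def)
  have fsne: "fs \<noteq> []"
  proof
    assume "fs = []"
    then obtain v where "vs = [v]" using len by (cases vs) auto
    then show False using w pq by simp
  qed
  have vsne: "vs \<noteq> []" using len by auto
  have dfs: "distinct fs" by (rule walk_distinct_edges[OF w(1) w(4)])
  have "vs = butlast vs @ [last vs]" using vsne by simp
  then have "distinct (butlast vs @ [last vs])" using w(4) by metis
  then have dws: "distinct (p # butlast vs)" using w(3) by auto
  let ?n = "length (e # fs)"
  have step: "(e # fs) ! i < length (edges T) \<and> joins T ((e # fs) ! i) ((p # butlast vs) ! i) ((p # butlast vs) ! ((i + 1) mod ?n))"
    if i: "i < ?n" for i
  proof (cases i)
    case 0
    have "(p # butlast vs) ! 1 = q"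
      using fsne len w(2) vsne by (cases vs; cases fs) (auto simp: nth_butlast)
    moreover have "(0 + 1) mod ?n = 1" using fsne by simp
    ultimately show ?thesis using 0 e by simp
  next
    case (Suc j)
    then have j: "j < length fs" using i by simp
    have wj: "fs ! j < length (edges T) \<and> joins T (fs ! j) (vs ! j) (vs ! Suc j)" using w(1) j by (simp add: walk_def)
    have a: "(p # butlast vs) ! i = vs ! j" using Suc j len by (simp add: nth_butlast)
    have b: "(p # butlast vs) ! ((i + 1) mod ?n) = vs ! Suc j"
    proof (cases "Suc j < length fs")
      case True
      then have "(i + 1) mod ?n = Suc (Suc j)" using Suc by simp
      then show ?thesis using True len by (simp add: nth_butlast)
    next
      case False
      then have "Suc j = length fs" using j by simp
      then have "(i + 1) mod ?n = 0" using Suc by simp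
      moreover have "vs ! Suc j = p" using w(3) len \<open>Suc j = length fs\<close> vsne by (subst (asm) last_conv_nth) auto
      ultimately show ?thesis by simp
    qed
    show ?thesis using wj a b Suc by simp
  qed
  show ?thesis unfolding simple_cycle_iff
    using dws dfs ne len step by (simp del: length_Cons)
qed

lemma last_append_tl: "ys \<noteq> [] \<Longrightarrow> last xs = hd ys \<Longrightarrow> xs \<noteq> [] \<Longrightarrow> last (xs @ tl ys) = last ys"
  by (cases ys) auto

lemma walk_ne_edges: "walk T vs es \<Longrightarrow> hd vs \<noteq> last vs \<Longrightarrow> es \<noteq> []"
  by (auto simp: walk_Nil_iff)

lemma cactus_path_cycle:
  assumes e1: "e1 < length (edges Q)" "joins Q e1 x w" and xw: "x \<noteq> w"
    and S: "walk Q (w # R) S" and W: "walk Q V W" "hd V = last (w # R)" "last V = x"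
    and ne: "e1 \<notin> set S" "e1 \<notin> set W"
  shows "\<exists>F. set (e1 # F) \<in> pads Q \<and> set F \<subseteq> set S \<union> set W \<and> F \<noteq> [] \<and>
             (esrc (edges Q ! last F) = x \<or> etgt (edges Q ! last F) = x)"
proof -
  have Vne: "V \<noteq> []" using walk_nonempty[OF W(1)] .
  have wa: "walk Q ((w # R) @ tl V) (S @ W)" using walk_append[OF S W(1)] W(2) by simp
  have hd: "hd ((w # R) @ tl V) = w" by simp
  have la: "last ((w # R) @ tl V) = x" using last_append_tl[OF Vne W(2)[symmetric]] W(3) by simp
  from walk_path[OF wa] obtain P F where P: "walk Q P F" "hd P = w" "last P = x" "distinct P" "set F \<subseteq> set (S @ W)"
    using hd la by metis
  have "e1 \<notin> set F" using P(5) ne by auto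
  from cycle_from_path[OF e1 xw[symmetric, symmetric] P(1) P(2) P(3) P(4) this]
  have "simple_cycle Q (e1 # F) (x # butlast P)" .
  then have "set (e1 # F) \<in> pads Q" unfolding pads_def by blast
  moreover have Fne: "F \<noteq> []" using walk_ne_edges[OF P(1)] P(2,3) xw by simp
  moreover have "esrc (edges Q ! last F) = x \<or> etgt (edges Q ! last F) = x"
    using walk_last_edge[OF P(1) Fne] P(3) by simp
  ultimately show ?thesis using P(5) by auto
qed

lemma cactus_three_walks:
  assumes cac: "is_cactus Q" and xy: "x \<noteq> y"
    and w1: "walk Q V1 W1" "hd V1 = x" "last V1 = y"
    and w2: "walk Q V2 W2" "hd V2 = y" "last V2 = x"
    and w3: "walk Q V3 W3" "hd V3 = y" "last V3 = x"
    and d12: "set W1 \<inter> set W2 = {}" and d13: "set W1 \<inter> set W3 = {}" and d23: "set W2 \<inter> set W3 = {}"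
  shows False
proof -
  have "x \<in> set V1" using w1(2) walk_nonempty[OF w1(1)] by auto
  from walk_hd_last_tl[OF w1(1) this] xy w1(3)
  obtain V W where V: "walk Q V W" "hd V = x" "last V = y" "x \<notin> set (tl V)" "set W \<subseteq> set W1"
    by auto
  have "W \<noteq> []" using walk_ne_edges[OF V(1)] V(2,3) xy by simp
  then obtain e1 S where WS: "W = e1 # S" by (cases W) auto
  from V(1)[unfolded WS] obtain v w R where vs: "V = v # w # R" "e1 < length (edges Q)" "joins Q e1 v w" "walk Q (w # R) S"
    by (rule walk_ConsE)
  have vx: "v = x" using V(2) vs(1) by simp
  have xnot: "x \<notin> set (w # R)" using V(4) vs(1) by simp
  then have xw: "x \<noteq> w" by auto
  have lastwR: "last (w # R) = y" using V(3) vs(1) by simp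
  have e1S: "e1 \<notin> set S"
  proof
    assume "e1 \<in> set S"
    from walk_endpoints[OF vs(4) this] have "x \<in> set (w # R)" using vs(3) vx unfolding joins_def by auto
    with xnot show False ..
  qed
  have e1W1: "e1 \<in> set W1" using V(5) WS by auto
  have e1W2: "e1 \<notin> set W2" using e1W1 d12 by auto
  have e1W3: "e1 \<notin> set W3" using e1W1 d13 by auto
  have j: "joins Q e1 x w" using vs(3) vx by simp
  from cactus_path_cycle[OF vs(2) j xw vs(4) w2(1) _ w2(3) e1S e1W2] w2(2) lastwR
  obtain F2 where F2: "set (e1 # F2) \<in> pads Q" "set F2 \<subseteq> set S \<union> set W2" "F2 \<noteq> []"
     "esrc (edges Q ! last F2) = x \<or> etgt (edges Q ! last F2) = x" by auto
  from cactus_path_cycle[OF vs(2) j xw vs(4) w3(1) _ w3(3) e1S e1W3] w3(2) lastwR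
  obtain F3 where F3: "set (e1 # F3) \<in> pads Q" "set F3 \<subseteq> set S \<union> set W3" by auto
  have "\<exists>!C. C \<in> pads Q \<and> e1 \<in> C" using cac vs(2) unfolding is_cactus_def by blast
  then have eq: "set (e1 # F2) = set (e1 # F3)" using F2(1) F3(1) by auto
  define f where "f = last F2"
  have fF2: "f \<in> set F2" using F2(3) by (simp add: f_def)
  have "e1 \<notin> set F2" using F2(2) e1S e1W2 by auto
  then have "f \<noteq> e1" using fF2 by auto
  then have "f \<in> set F3" using eq fF2 by auto
  then have "f \<in> set S" using fF2 F2(2) F3(2) d23 by auto
  from walk_endpoints[OF vs(4) this] F2(4) xnot show False unfolding f_def by auto
qed

lemma map_tg_comp: "map_tg g (map_tg f T) = map_tg (g \<circ> f) T"
  by (simp add: map_tg_def image_image split_def)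

lemma map_tg_union: "map_tg f (tg_union A B) = tg_union (map_tg f A) (map_tg f B)"
  by (simp add: map_tg_def tg_union_def image_Un)

lemma edges_map_tg: "edges (map_tg f T) = map (\<lambda>(s, a, t). (f s, a, f t)) (edges T)"
  by (simp add: map_tg_def)

lemma verts_map_tg: "verts (map_tg f T) = f ` verts T"
  by (simp add: map_tg_def)

lemma length_edges_map_tg[simp]: "length (edges (map_tg f T)) = length (edges T)"
  by (simp add: map_tg_def)

lemma nth_edges_map_tg:
  assumes "k < length (edges T)"
  shows "esrc (edges (map_tg f T) ! k) = f (esrc (edges T ! k))"
    "etgt (edges (map_tg f T) ! k) = f (etgt (edges T ! k))"
    "elab (edges (map_tg f T) ! k) = elab (edges T ! k)"
  using assms by (simp_all add: map_tg_def esrc_def etgt_def elab_def split_def)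

lemma walk_map: "walk T vs es \<Longrightarrow> walk (map_tg f T) (map f vs) es"
  unfolding walk_def joins_def by (auto simp: nth_edges_map_tg)

lemma walk_union_l: "walk A vs es \<Longrightarrow> walk (tg_union A B) vs es"
  unfolding walk_def joins_def by (auto simp: tg_union_def nth_append)

lemma walk_union_r: "walk B vs es \<Longrightarrow> walk (tg_union A B) vs (map ((+) (length (edges A))) es)"
  unfolding walk_def joins_def by (auto simp: tg_union_def nth_append)

lemma rtrancl_walk:
  assumes "(x, y) \<in> (adj T)\<^sup>*"
  shows "\<exists>vs es. walk T vs es \<and> hd vs = x \<and> last vs = y"
  using assms
proof (induction rule: rtrancl_induct)
  case base
  show ?case by (intro exI[of _ "[x]"] exI[of _ "[]"]) simp
next
  case (step y z)
  from step.IH obtain vs es where w: "walk T vs es" "hd vs = x" "last vs = y" by blast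
  from step.hyps(2) obtain e where e: "e \<in> set (edges T)" "(esrc e = y \<and> etgt e = z) \<or> (etgt e = y \<and> esrc e = z)"
    unfolding adj_def by blast
  then obtain k where k: "k < length (edges T)" "edges T ! k = e" by (metis in_set_conv_nth)
  have "walk T [y, z] [k]" using k e by (simp add: walk_Cons joins_def)
  from walk_append[OF w(1) this] w(3) have "walk T (vs @ [z]) (es @ [k])" by simp
  then show ?case using w walk_nonempty[OF w(1)] by (intro exI[of _ "vs @ [z]"] exI[of _ "es @ [k]"]) simp
qed

lemma mod_inj_aux:
  fixes i k k' n :: nat
  assumes "i < n" "k < n" "k' < n" "(i + k) mod n = (i + k') mod n"
  shows "k = k'"
proof -
  have m: "(i + m) mod n = (if i + m < n then i + m else i + m - n)" if "m < n" for m
  proof (cases "i + m < n")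
    case False
    then have "(i + m) mod n = (i + m - n) mod n" by (simp add: le_mod_geq)
    also have "\<dots> = i + m - n" using assms(1) that by simp
    finally show ?thesis using False by simp
  qed simp
  show ?thesis using assms m[OF assms(2)] m[OF assms(3)] by (auto split: if_splits)
qed

lemma cycle_arcs:
  assumes sc: "simple_cycle T es ws" and p: "p \<in> set ws" and q: "q \<in> set ws" and pq: "p \<noteq> q"
  shows "\<exists>V1 W1 V2 W2. walk T V1 W1 \<and> hd V1 = p \<and> last V1 = q \<and>
            walk T V2 W2 \<and> hd V2 = q \<and> last V2 = p \<and> set W1 \<inter> set W2 = {}"
proof -
  let ?n = "length es"
  have c: "?n \<ge> 1" "length ws = ?n" "distinct es"
    "\<And>m. m < ?n \<Longrightarrow> es ! m < length (edges T) \<and> joins T (es ! m) (ws ! m) (ws ! ((m + 1) mod ?n))"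
    using sc unfolding simple_cycle_iff by auto
  obtain i where i: "i < ?n" "ws ! i = p" using p c(2) by (metis in_set_conv_nth)
  obtain j where j: "j < ?n" "ws ! j = q" using q c(2) by (metis in_set_conv_nth)
  define arcV where "arcV a b = map (\<lambda>k. ws ! ((i + k) mod ?n)) [a..<Suc b]" for a b
  define arcE where "arcE a b = map (\<lambda>k. es ! ((i + k) mod ?n)) [a..<b]" for a b
  have arcw: "walk T (arcV a b) (arcE a b)" if "a \<le> b" for a b
    unfolding walk_def
  proof (intro conjI allI impI)
    show "length (arcV a b) = Suc (length (arcE a b))" using that by (simp add: arcV_def arcE_def)
  next
    fix r assume r: "r < length (arcE a b)"
    then have r': "a + r < b" by (simp add: arcE_def)
    have u1: "[a..<b] ! r = a + r" using r' by (rule nth_upt)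
    have u2: "[a..<Suc b] ! r = a + r" using r' by (intro nth_upt) simp
    have u3: "[a..<Suc b] ! Suc r = a + Suc r" using r' by (intro nth_upt) simp
    define m where "m = (i + (a + r)) mod ?n"
    have mn: "m < ?n" using c(1) unfolding m_def by (intro mod_less_divisor) linarith
    have e: "arcE a b ! r = es ! m" using r' u1 by (simp add: arcE_def m_def del: upt_Suc)
    have v1: "arcV a b ! r = ws ! m" using r' u2 by (simp add: arcV_def m_def del: upt_Suc)
    have v2: "arcV a b ! Suc r = ws ! ((m + 1) mod ?n)" using r'
      using u3 by (simp add: arcV_def m_def mod_Suc_eq add.assoc del: upt_Suc)
    show "arcE a b ! r < length (edges T)" using c(4)[OF mn] e by simp
    show "joins T (arcE a b ! r) (arcV a b ! r) (arcV a b ! Suc r)" using c(4)[OF mn] e v1 v2 by simp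
  qed
  define L where "L = (j + ?n - i) mod ?n"
  have Ln: "L < ?n" using c(1) unfolding L_def by (intro mod_less_divisor) linarith
  have iL: "(i + L) mod ?n = j"
  proof -
    have "(i + L) mod ?n = (i + (j + ?n - i)) mod ?n" unfolding L_def by (simp add: mod_add_right_eq)
    also have "i + (j + ?n - i) = j + ?n" using i by simp
    finally show ?thesis using j by simp
  qed
  have hd1: "hd (arcV 0 L) = p" using i by (simp add: arcV_def upt_conv_Cons del: upt_Suc)
  have last1: "last (arcV 0 L) = q" using iL j by (simp add: arcV_def)
  have hd2: "hd (arcV L ?n) = q" using iL j Ln by (simp add: arcV_def upt_conv_Cons del: upt_Suc)
  have last2: "last (arcV L ?n) = p" using i Ln by (simp add: arcV_def)
  have disj: "set (arcE 0 L) \<inter> set (arcE L ?n) = {}"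
  proof (rule ccontr)
    assume "set (arcE 0 L) \<inter> set (arcE L ?n) \<noteq> {}"
    then obtain k k' where kk: "k < L" "L \<le> k'" "k' < ?n" "es ! ((i + k) mod ?n) = es ! ((i + k') mod ?n)"
      by (auto simp: arcE_def)
    have "(i + k) mod ?n = (i + k') mod ?n"
      using kk(4) c(3) nth_eq_iff_index_eq c(1) by (metis less_le_trans mod_less_divisor not_one_le_zero not_less)
    then have "k = k'" using mod_inj_aux[OF i(1), of k k'] kk Ln by simp
    then show False using kk by simp
  qed
  show ?thesis
    using arcw[of 0 L] arcw[of L ?n] hd1 last1 hd2 last2 disj Ln
    by (intro exI[of _ "arcV 0 L"] exI[of _ "arcE 0 L"] exI[of _ "arcV L ?n"] exI[of _ "arcE L ?n"]) auto
qed

definition wfg :: "('v, 'a) tgraph \<Rightarrow> bool" where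
  "wfg T \<longleftrightarrow> (\<forall>e\<in>set (edges T). esrc e \<in> verts T \<and> etgt e \<in> verts T)"

lemma wfg_nth: "wfg T \<Longrightarrow> k < length (edges T) \<Longrightarrow> esrc (edges T ! k) \<in> verts T \<and> etgt (edges T ! k) \<in> verts T"
  unfolding wfg_def by auto

lemma wfg_map: "wfg T \<Longrightarrow> wfg (map_tg f T)"
  unfolding wfg_def by (auto simp: map_tg_def esrc_def etgt_def)

lemma map_tg_cong:
  assumes "wfg T" "\<And>v. v \<in> verts T \<Longrightarrow> f v = g v"
  shows "map_tg f T = map_tg g T"
proof -
  have "map (\<lambda>(s, a, t). (f s, a, f t)) (edges T) = map (\<lambda>(s, a, t). (g s, a, g t)) (edges T)"
  proof (rule map_cong[OF refl])
    fix e assume "e \<in> set (edges T)"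
    then have "fst e \<in> verts T" "snd (snd e) \<in> verts T" using assms(1) by (auto simp: wfg_def esrc_def etgt_def)
    then show "(\<lambda>(s, a, t). (f s, a, f t)) e = (\<lambda>(s, a, t). (g s, a, g t)) e"
      using assms(2) by (auto simp: split_def)
  qed
  moreover have "f ` verts T = g ` verts T" using assms(2) by (auto intro: image_cong)
  ultimately show ?thesis by (simp add: map_tg_def)
qed

lemma map_tg_id_on:
  assumes "wfg T" "\<And>v. v \<in> verts T \<Longrightarrow> f v = v"
  shows "map_tg f T = T"
proof -
  have "map_tg f T = map_tg id T" using assms(2) by (intro map_tg_cong[OF assms(1)]) simp
  also have "\<dots> = T" by (cases T) (simp add: map_tg_def split_def)
  finally show ?thesis .
qed

lemma map_tg_inv:
  assumes "wfg T" "inj_on g (verts T)"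
  shows "map_tg (inv_into (verts T) g) (map_tg g T) = T"
  unfolding map_tg_comp using assms by (intro map_tg_id_on) auto

lemma adj_map_rtrancl:
  assumes "(x, y) \<in> (adj T)\<^sup>*"
  shows "(f x, f y) \<in> (adj (map_tg f T))\<^sup>*"
  using assms
proof (induction rule: rtrancl_induct)
  case base then show ?case by simp
next
  case (step y z)
  from step.hyps(2) obtain e where e: "e \<in> set (edges T)" "(esrc e = y \<and> etgt e = z) \<or> (etgt e = y \<and> esrc e = z)"
    unfolding adj_def by blast
  let ?e = "(f (esrc e), elab e, f (etgt e))"
  have "?e \<in> set (edges (map_tg f T))" using e(1)
    by (force simp: map_tg_def esrc_def etgt_def elab_def split_def)
  then have "(f y, f z) \<in> adj (map_tg f T)" using e(2) unfolding adj_def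
    by (auto simp: esrc_def etgt_def)
  with step.IH show ?case by (rule rtrancl_into_rtrancl)
qed

lemma test_graph_map: "test_graph T \<Longrightarrow> test_graph (map_tg f T)"
  unfolding test_graph_def
  apply (intro conjI)
  apply (simp add: map_tg_def)
  apply (simp add: map_tg_def)
  apply (force simp: map_tg_def esrc_def etgt_def split_def)
  apply (auto simp: verts_map_tg intro!: adj_map_rtrancl)
  done

lemma simple_cycle_verts:
  assumes "simple_cycle T es ws" "wfg T"
  shows "set ws \<subseteq> verts T"
proof
  fix v assume "v \<in> set ws"
  then obtain i where i: "i < length ws" "ws ! i = v" by (metis in_set_conv_nth)
  have "es ! i < length (edges T) \<and> joins T (es ! i) (ws ! i) (ws ! ((i + 1) mod length es))"
    using assms(1) i unfolding simple_cycle_iff by auto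
  then show "v \<in> verts T" using wfg_nth[OF assms(2)] i unfolding joins_def by metis
qed

lemma simple_cycle_map:
  assumes "simple_cycle T es ws" "wfg T" "inj_on g (verts T)"
  shows "simple_cycle (map_tg g T) es (map g ws)"
proof -
  have sv: "set ws \<subseteq> verts T" by (rule simple_cycle_verts[OF assms(1,2)])
  have inj: "inj_on g (set ws)" using assms(3) sv inj_on_subset by blast
  have c: "length es \<ge> 1" "length ws = length es" "distinct es" "distinct ws"
    "\<And>i. i < length es \<Longrightarrow> es ! i < length (edges T) \<and> joins T (es ! i) (ws ! i) (ws ! ((i + 1) mod length es))"
    using assms(1) unfolding simple_cycle_iff by auto
  show ?thesis unfolding simple_cycle_iff
  proof (intro conjI allI impI)
    show "distinct (map g ws)" using c(4) inj by (simp add: distinct_map)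
  next
    fix i assume i: "i < length es"
    have m: "(i + 1) mod length es < length es" using c(1) by (intro mod_less_divisor) linarith
    show "es ! i < length (edges (map_tg g T))" using c(5)[OF i] by simp
    show "joins (map_tg g T) (es ! i) (map g ws ! i) (map g ws ! ((i + 1) mod length es))"
      using c(5)[OF i] i m c(2) by (auto simp: joins_def nth_edges_map_tg)
  qed (use c in auto)
qed

lemma pads_sub_map:
  assumes "wfg T" "inj_on g (verts T)"
  shows "pads T \<subseteq> pads (map_tg g T)"
  unfolding pads_def using simple_cycle_map[OF _ assms] by blast

lemma pads_map:
  assumes "wfg T" "inj_on g (verts T)"
  shows "pads (map_tg g T) = pads T"
proof
  show "pads T \<subseteq> pads (map_tg g T)" by (rule pads_sub_map[OF assms])
  have "pads (map_tg g T) \<subseteq> pads (map_tg (inv_into (verts T) g) (map_tg g T))"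
    by (rule pads_sub_map) (auto simp: wfg_map assms(1) verts_map_tg intro: inj_on_inv_into)
  then show "pads (map_tg g T) \<subseteq> pads T" using map_tg_inv[OF assms] by simp
qed

lemma test_graph_map_iff:
  assumes "wfg T" "inj_on g (verts T)"
  shows "test_graph (map_tg g T) \<longleftrightarrow> test_graph T"
  using test_graph_map[of T g] test_graph_map[of "map_tg g T" "inv_into (verts T) g"] map_tg_inv[OF assms]
  by auto

lemma pads_valid: "C \<in> pads T \<Longrightarrow> C \<subseteq> {..<length (edges T)}"
  unfolding pads_def simple_cycle_iff by (auto simp: in_set_conv_nth)

lemma directed_listing_map:
  assumes "wfg T" "inj_on g (verts T)" "C \<subseteq> {..<length (edges T)}"
  shows "directed_listing (map_tg g T) C es \<longleftrightarrow> directed_listing T C es"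
proof (cases "distinct es \<and> set es = C")
  case True
  have valid: "\<And>i. i < length es \<Longrightarrow> es ! i < length (edges T)" using True assms(3) nth_mem by blast
  have eq: "esrc (edges (map_tg g T) ! (es ! i)) = etgt (edges (map_tg g T) ! (es ! ((i + 1) mod length es)))
        \<longleftrightarrow> esrc (edges T ! (es ! i)) = etgt (edges T ! (es ! ((i + 1) mod length es)))"
    if i: "i < length es" for i
  proof -
    have m: "(i + 1) mod length es < length es" using i by (intro mod_less_divisor) linarith
    have v1: "es ! i < length (edges T)" by (rule valid[OF i])
    have v2: "es ! ((i + 1) mod length es) < length (edges T)" by (rule valid[OF m])
    show ?thesis using v1 v2 wfg_nth[OF assms(1) v1] wfg_nth[OF assms(1) v2]
      by (simp add: nth_edges_map_tg inj_on_eq_iff[OF assms(2)])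
  qed
  show ?thesis unfolding directed_listing_def using True eq by auto
next
  case False
  then show ?thesis unfolding directed_listing_def by auto
qed

lemma tau0_map:
  assumes "wfg T" "inj_on g (verts T)"
  shows "tau0 kappa (map_tg g T) = tau0 kappa T"
proof -
  have pm: "pads (map_tg g T) = pads T" by (rule pads_map[OF assms])
  have dl: "\<And>C. C \<in> pads T \<Longrightarrow> (\<lambda>es. directed_listing (map_tg g T) C es) = (\<lambda>es. directed_listing T C es)"
    using directed_listing_map[OF assms pads_valid] by blast
  have oc: "oriented_cactus (map_tg g T) \<longleftrightarrow> oriented_cactus T"
    unfolding oriented_cactus_def is_cactus_def using pm dl test_graph_map_iff[OF assms] by simp
  show ?thesis
  proof (cases "oriented_cactus T")
    case False then show ?thesis using oc by (simp add: tau0_def)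
  next
    case True
    have f: "kappa (map (\<lambda>i. elab (edges (map_tg g T) ! i)) (SOME es. directed_listing (map_tg g T) C es)) =
             kappa (map (\<lambda>i. elab (edges T ! i)) (SOME es. directed_listing T C es))" if C: "C \<in> pads T" for C
    proof -
      have "\<exists>es. directed_listing T C es" using True C unfolding oriented_cactus_def by blast
      then have "directed_listing T C (SOME es. directed_listing T C es)" by (rule someI_ex)
      then have "set (SOME es. directed_listing T C es) \<subseteq> {..<length (edges T)}"
        using pads_valid[OF C] unfolding directed_listing_def by auto
      then show ?thesis using dl[OF C] by (auto simp: nth_edges_map_tg intro!: arg_cong[where f = kappa] map_cong)
    qed
    show ?thesis using True oc pm f by (simp add: tau0_def)
  qed
qed

lemma block_of_eq:
  assumes "partition_on V P" "B \<in> P" "x \<in> B"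
  shows "block_of P x = B"
  unfolding block_of_def
proof (rule the_equality)
  show "B \<in> P \<and> x \<in> B" using assms by simp
  fix B' assume "B' \<in> P \<and> x \<in> B'"
  then show "B' = B" using assms partition_onD2[OF assms(1)] unfolding disjoint_def by blast
qed

lemma block_of_mem:
  assumes "partition_on V P" "x \<in> V"
  shows "block_of P x \<in> P \<and> x \<in> block_of P x"
proof -
  from assms obtain B where "B \<in> P" "x \<in> B" using partition_onD1[OF assms(1)] by blast
  then show ?thesis using block_of_eq[OF assms(1)] by simp
qed

lemma tau_merge_eq:
  fixes T :: "('v, 'a) tgraph"
  assumes wf: "wfg T" and fin: "finite (verts T)" and ab: "a \<in> verts T" "b \<in> verts T" "a \<noteq> b"
    and zero: "\<And>P. partition_on (verts T) P \<Longrightarrow> block_of P a \<noteq> block_of P b \<Longrightarrow> tau0 kappa (quot_tg T P) = 0"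
  shows "tau kappa T = tau kappa (map_tg (\<lambda>v. if v = a then b else v) T)"
proof -
  define V where "V = verts T"
  define \<sigma> where "\<sigma> = (\<lambda>v. if v = a then b else v)"
  define rb where "rb = (\<lambda>B::'v set. B - {a})"
  define ib where "ib = (\<lambda>B::'v set. if b \<in> B then insert a B else B)"
  define S1 where "S1 = {P. partition_on V P \<and> block_of P a = block_of P b}"
  define S2 where "S2 = {Q. partition_on (V - {a}) Q}"
  have sV: "\<sigma> ` V = V - {a}" using ab unfolding V_def \<sigma>_def by auto
  have spl: "tau kappa T = (\<Sum>P\<in>S1. tau0 kappa (quot_tg T P))"
    unfolding tau_def
  proof (rule sum.mono_neutral_right)
    show "finite {P. partition_on (verts T) P}" using fin by (rule finitely_many_partition_on)
    show "S1 \<subseteq> {P. partition_on (verts T) P}" unfolding S1_def V_def by auto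
    show "\<forall>P\<in>{P. partition_on (verts T) P} - S1. tau0 kappa (quot_tg T P) = 0"
      using zero unfolding S1_def V_def by auto
  qed
  have rhs: "tau kappa (map_tg \<sigma> T) = (\<Sum>Q\<in>S2. tau0 kappa (quot_tg (map_tg \<sigma> T) Q))"
    unfolding tau_def S2_def verts_map_tg sV[unfolded V_def] V_def ..
  have S1facts: "ib (rb B) = B \<and> rb B \<noteq> {} \<and> (a \<in> B \<longleftrightarrow> b \<in> B)"
    if P: "P \<in> S1" and B: "B \<in> P" for P B
  proof -
    have pP: "partition_on V P" and eqab: "block_of P a = block_of P b" using P unfolding S1_def by auto
    have m0: "block_of P a \<in> P \<and> a \<in> block_of P a" using block_of_mem[OF pP] ab unfolding V_def by blast
    have m1: "block_of P b \<in> P \<and> b \<in> block_of P b" using block_of_mem[OF pP] ab unfolding V_def by blast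
    have ne: "B \<noteq> {}" using partition_onD3[OF pP] B by auto
    show ?thesis
    proof (cases "a \<in> B")
      case True
      then have "B = block_of P a" using block_of_eq[OF pP B] by simp
      then have "b \<in> B" using m1 eqab by simp
      then show ?thesis using True ab(3) unfolding rb_def ib_def by auto
    next
      case False
      have "b \<notin> B"
      proof
        assume "b \<in> B"
        then have "B = block_of P b" using block_of_eq[OF pP B] by simp
        then show False using False m0 eqab by simp
      qed
      then show ?thesis using False ne unfolding rb_def ib_def by auto
    qed
  qed
  have injrb: "inj_on rb P" if P: "P \<in> S1" for P
  proof (rule inj_onI)
    fix B1 B2 assume B: "B1 \<in> P" "B2 \<in> P" "rb B1 = rb B2"
    show "B1 = B2"
    proof (rule ccontr)
      assume "B1 \<noteq> B2"
      then have "B1 \<inter> B2 = {}" using P B partition_onD2 unfolding S1_def disjoint_def by blast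
      then have "rb B1 = {}" using B(3) unfolding rb_def by blast
      then show False using S1facts[OF P B(1)] by simp
    qed
  qed
  have rem_ok: "rb ` P \<in> S2" if P: "P \<in> S1" for P
  proof -
    have pP: "partition_on V P" using P unfolding S1_def by auto
    show ?thesis unfolding S2_def mem_Collect_eq
    proof (rule partition_onI)
      show "\<Union>(rb ` P) = V - {a}" using partition_onD1[OF pP] unfolding rb_def by auto
      show "{} \<notin> rb ` P" using S1facts[OF P] by auto
      fix p q assume "p \<in> rb ` P" "q \<in> rb ` P" "p \<noteq> q"
      then obtain B1 B2 where "B1 \<in> P" "B2 \<in> P" "p = rb B1" "q = rb B2" "B1 \<noteq> B2" by auto
      then have "B1 \<inter> B2 = {}" using partition_onD2[OF pP] unfolding disjoint_def by blast
      then show "disjnt p q" using \<open>p = rb B1\<close> \<open>q = rb B2\<close> unfolding rb_def disjnt_def by blast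
    qed
  qed
  have ins_ok: "ib ` Q \<in> S1 \<and> rb ` ib ` Q = Q" if Q: "Q \<in> S2" for Q
  proof -
    have pQ: "partition_on (V - {a}) Q" using Q unfolding S2_def by auto
    have aQ: "\<And>B. B \<in> Q \<Longrightarrow> a \<notin> B" using partition_onD1[OF pQ] by auto
    have bV: "b \<in> V - {a}" using ab unfolding V_def by auto
    obtain Bb where Bb: "Bb \<in> Q" "b \<in> Bb" using partition_onD1[OF pQ] bV by auto
    have pI: "partition_on V (ib ` Q)"
    proof (rule partition_onI)
      show "\<Union>(ib ` Q) = V"
      proof
        show "\<Union>(ib ` Q) \<subseteq> V" using partition_onD1[OF pQ] ab unfolding ib_def V_def by auto
        show "V \<subseteq> \<Union>(ib ` Q)"
        proof
          fix v assume v: "v \<in> V"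
          show "v \<in> \<Union>(ib ` Q)"
          proof (cases "v = a")
            case True
            then have "v \<in> ib Bb" using Bb unfolding ib_def by simp
            then show ?thesis using Bb by blast
          next
            case False
            then obtain B where "B \<in> Q" "v \<in> B" using partition_onD1[OF pQ] v by auto
            moreover have "B \<subseteq> ib B" unfolding ib_def by auto
            ultimately show ?thesis by blast
          qed
        qed
      qed
      show "{} \<notin> ib ` Q" using partition_onD3[OF pQ] unfolding ib_def by auto
      fix p q assume "p \<in> ib ` Q" "q \<in> ib ` Q" "p \<noteq> q"
      then obtain B1 B2 where B: "B1 \<in> Q" "B2 \<in> Q" "p = ib B1" "q = ib B2" "B1 \<noteq> B2" by auto
      then have d: "B1 \<inter> B2 = {}" using partition_onD2[OF pQ] unfolding disjoint_def by blast
      then have "\<not> (b \<in> B1 \<and> b \<in> B2)" by blast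
      then show "disjnt p q" using d B aQ[OF B(1)] aQ[OF B(2)] unfolding ib_def disjnt_def by auto
    qed
    have "ib Bb \<in> ib ` Q" using Bb by simp
    moreover have "a \<in> ib Bb" "b \<in> ib Bb" using Bb unfolding ib_def by auto
    ultimately have "block_of (ib ` Q) a = block_of (ib ` Q) b"
      using block_of_eq[OF pI] by metis
    then have "ib ` Q \<in> S1" using pI unfolding S1_def by simp
    moreover have "rb ` ib ` Q = Q"
    proof -
      have "rb (ib B) = B" if "B \<in> Q" for B using aQ[OF that] unfolding rb_def ib_def by auto
      then have "rb ` ib ` Q = (\<lambda>B. B) ` Q" by (simp add: image_image cong: image_cong)
      then show ?thesis by simp
    qed
    ultimately show ?thesis by simp
  qed
  have bk: "ib ` rb ` P = P" if "P \<in> S1" for P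
  proof -
    have "ib ` rb ` P = (\<lambda>B. B) ` P" using S1facts[OF that] by (simp add: image_image cong: image_cong)
    then show ?thesis by simp
  qed
  have teq: "tau0 kappa (quot_tg (map_tg \<sigma> T) (rb ` P)) = tau0 kappa (quot_tg T P)" if P: "P \<in> S1" for P
  proof -
    have pP: "partition_on V P" using P unfolding S1_def by auto
    have pR: "partition_on (V - {a}) (rb ` P)" using rem_ok[OF P] unfolding S2_def by simp
    have bl: "block_of (rb ` P) (\<sigma> v) = rb (block_of P v)" if v: "v \<in> V" for v
    proof (rule block_of_eq[OF pR])
      have m: "block_of P v \<in> P \<and> v \<in> block_of P v" using block_of_mem[OF pP v] .
      then show "rb (block_of P v) \<in> rb ` P" by simp
      show "\<sigma> v \<in> rb (block_of P v)"
      proof (cases "v = a")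
        case True
        then have "b \<in> block_of P v" using m S1facts[OF P, of "block_of P v"] by simp
        then show ?thesis using True ab(3) unfolding \<sigma>_def rb_def by simp
      next
        case False
        then show ?thesis using m unfolding \<sigma>_def rb_def by simp
      qed
    qed
    have "quot_tg (map_tg \<sigma> T) (rb ` P) = map_tg (block_of (rb ` P) \<circ> \<sigma>) T"
      unfolding quot_tg_def map_tg_comp ..
    also have "\<dots> = map_tg (rb \<circ> block_of P) T"
      using bl unfolding V_def by (intro map_tg_cong[OF wf]) simp
    also have "\<dots> = map_tg rb (quot_tg T P)" unfolding quot_tg_def map_tg_comp ..
    finally have e: "quot_tg (map_tg \<sigma> T) (rb ` P) = map_tg rb (quot_tg T P)" .
    have vq: "verts (quot_tg T P) \<subseteq> P"
      using block_of_mem[OF pP] unfolding quot_tg_def verts_map_tg V_def by auto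
    have "inj_on rb (verts (quot_tg T P))" using injrb[OF P] vq inj_on_subset by blast
    moreover have "wfg (quot_tg T P)" unfolding quot_tg_def using wf by (rule wfg_map)
    ultimately show ?thesis using e tau0_map by metis
  qed
  have "(\<Sum>P\<in>S1. tau0 kappa (quot_tg T P)) = (\<Sum>Q\<in>S2. tau0 kappa (quot_tg (map_tg \<sigma> T) Q))"
  proof (rule sum.reindex_bij_witness[where i = "\<lambda>Q. ib ` Q" and j = "\<lambda>P. rb ` P"])
    show "\<And>P. P \<in> S1 \<Longrightarrow> ib ` rb ` P = P" by (rule bk)
    show "\<And>P. P \<in> S1 \<Longrightarrow> rb ` P \<in> S2" by (rule rem_ok)
    show "\<And>Q. Q \<in> S2 \<Longrightarrow> rb ` ib ` Q = Q" using ins_ok by blast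
    show "\<And>Q. Q \<in> S2 \<Longrightarrow> ib ` Q \<in> S1" using ins_ok by blast
    show "\<And>P. P \<in> S1 \<Longrightarrow> tau0 kappa (quot_tg (map_tg \<sigma> T) (rb ` P)) = tau0 kappa (quot_tg T P)" by (rule teq)
  qed
  then show ?thesis using spl rhs unfolding \<sigma>_def by simp
qed

lemma map_tg_ident: "map_tg (\<lambda>v. v) T = T"
  by (cases T) (simp add: map_tg_def split_def)

lemma wfg_union: "wfg A \<Longrightarrow> wfg B \<Longrightarrow> wfg (tg_union A B)"
  unfolding wfg_def tg_union_def by auto

lemma test_graph_wfg: "test_graph T \<Longrightarrow> wfg T"
  unfolding test_graph_def wfg_def by auto

lemma odd_ne_even[simp]: "Suc (2 * x) \<noteq> 2 * (y::nat)" "2 * y \<noteq> Suc (2 * (x::nat))"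
  "2 * x + 1 \<noteq> 2 * (y::nat)" "2 * y \<noteq> 2 * (x::nat) + 1"
  by presburger+

lemma G1_eq:
  fixes t u :: "(nat, 'a) gmon"
  assumes "vin t \<noteq> vout t"
  shows "Delta_tilde (gm_mult t u) =
    tg_union (map_tg (\<lambda>v. if v = vin t then 2 * vout u + 1 else if v = vout t then 2 * vin u + 1 else 2 * v) (graph t))
             (map_tg (\<lambda>v. 2 * v + 1) (graph u))"
proof -
  define h where "h = (\<lambda>w::nat. if w = 2 * vin t then 2 * vout u + 1 else w)"
  define m where "m = (\<lambda>w::nat. if w = 2 * vout t then 2 * vin u + 1 else w)"
  have g: "graph (gm_mult t u) = map_tg h (tg_union (map_tg (\<lambda>v. 2 * v) (graph t)) (map_tg (\<lambda>v. 2 * v + 1) (graph u)))"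
    unfolding gm_mult_def Let_def h_def by simp
  have vi: "vin (gm_mult t u) = 2 * vin u + 1" unfolding gm_mult_def Let_def by simp
  have vo: "vout (gm_mult t u) = 2 * vout t" unfolding gm_mult_def Let_def using assms by simp
  have me: "merge_io (gm_mult t u) = m" unfolding m_def merge_io_def vi vo by (rule ext) simp
  have f1: "m \<circ> (h \<circ> (\<lambda>v. 2 * v)) =
      (\<lambda>v. if v = vin t then 2 * vout u + 1 else if v = vout t then 2 * vin u + 1 else 2 * v)"
    using assms by (auto simp: fun_eq_iff m_def h_def)
  have f2: "m \<circ> (h \<circ> (\<lambda>v. 2 * v + 1)) = (\<lambda>v. 2 * v + 1)"
    by (auto simp: fun_eq_iff m_def h_def)
  show ?thesis
    unfolding Delta_tilde_def me g map_tg_union map_tg_comp f1 f2 ..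
qed

lemma G2_eq:
  fixes t u :: "(nat, 'a) gmon"
  assumes ne: "vin t \<noteq> vout t"
  shows "Delta_tilde (gm_mult (Delta t) u) =
    map_tg (\<lambda>v. if v = 2 * vout u + 1 then 2 * vin u + 1 else v) (Delta_tilde (gm_mult t u))"
proof -
  define h where "h = (\<lambda>w::nat. if w = 2 * vin t then 2 * vout u + 1 else w)"
  define \<sigma> where "\<sigma> = (\<lambda>v::nat. if v = 2 * vout u + 1 then 2 * vin u + 1 else v)"
  have g: "graph (gm_mult (Delta t) u) = map_tg h (tg_union (map_tg (\<lambda>v. 2 * v) (map_tg (merge_io t) (graph t))) (map_tg (\<lambda>v. 2 * v + 1) (graph u)))"
    unfolding gm_mult_def Let_def h_def Delta_def by simp
  have vi: "vin (gm_mult (Delta t) u) = 2 * vin u + 1" unfolding gm_mult_def Let_def by simp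
  have vo: "vout (gm_mult (Delta t) u) = 2 * vout u + 1" unfolding gm_mult_def Let_def Delta_def by simp
  have me: "merge_io (gm_mult (Delta t) u) = \<sigma>" unfolding \<sigma>_def merge_io_def vi vo by (rule ext) simp
  have f1: "\<sigma> \<circ> (h \<circ> ((\<lambda>v. 2 * v) \<circ> merge_io t)) =
      \<sigma> \<circ> (\<lambda>v. if v = vin t then 2 * vout u + 1 else if v = vout t then 2 * vin u + 1 else 2 * v)"
    using ne by (auto simp: fun_eq_iff \<sigma>_def h_def merge_io_def)
  have f2: "\<sigma> \<circ> (h \<circ> (\<lambda>v. 2 * v + 1)) = \<sigma> \<circ> (\<lambda>v. 2 * v + 1)"
    by (auto simp: fun_eq_iff h_def)
  show ?thesis
    unfolding Delta_tilde_def[of "gm_mult (Delta t) u"] me g map_tg_union map_tg_comp f1 f2 G1_eq[OF ne] \<sigma>_def[symmetric] ..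
qed

lemma walk_edges_lt: "walk T vs es \<Longrightarrow> set es \<subseteq> {..<length (edges T)}"
  unfolding walk_def by (auto simp: in_set_conv_nth)

lemma walk_hd_last_map:
  assumes "walk T vs es"
  shows "hd (map f vs) = f (hd vs)" "last (map f vs) = f (last vs)"
  using walk_nonempty[OF assms] by (simp_all add: hd_map last_map)

theorem corollary2p10:
  fixes c :: "complex \<Rightarrow> 'a::ring_1" and phi :: "'a \<Rightarrow> complex"
    and kappa :: "'a list \<Rightarrow> complex" and t :: "(nat, 'a) gmon"
  assumes "tracial_ncps c phi"
    and "free_cumulants phi kappa"
    and "graph_monomial t"
    and "in_Theta t"
  shows "\<forall>u :: (nat, 'a) gmon. graph_monomial u \<longrightarrow>
           psi kappa (gm_mult t u) = psi kappa (gm_mult (Delta t) u)"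
proof (intro allI impI)
  fix u :: "(nat, 'a) gmon"
  assume gu: "graph_monomial u"
  have tgt: "test_graph (graph t)" and vt: "vin t \<in> verts (graph t)" "vout t \<in> verts (graph t)"
    using assms(3) unfolding graph_monomial_def by auto
  have tgu: "test_graph (graph u)" and vu: "vin u \<in> verts (graph u)" "vout u \<in> verts (graph u)"
    using gu unfolding graph_monomial_def by auto
  show "psi kappa (gm_mult t u) = psi kappa (gm_mult (Delta t) u)"
  proof (cases "vin t = vout t")
    case True
    have "merge_io t = (\<lambda>v. v)" using True by (auto simp: fun_eq_iff merge_io_def)
    then have "Delta t = t" using True unfolding Delta_def by (cases t) (simp add: map_tg_ident)
    then show ?thesis by simp
  next
    case ne: False
    obtain es ws where sc: "simple_cycle (graph t) es ws" "vin t \<in> set ws" "vout t \<in> set ws"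
      using assms(4) ne unfolding in_Theta_def by blast
    define a where "a = 2 * vout u + 1"
    define b where "b = 2 * vin u + 1"
    define F where "F = (\<lambda>v. if v = vin t then 2 * vout u + 1 else if v = vout t then 2 * vin u + 1 else 2 * v)"
    define Gf where "Gf = (\<lambda>v::nat. 2 * v + 1)"
    define G1 where "G1 = Delta_tilde (gm_mult t u)"
    have G1: "G1 = tg_union (map_tg F (graph t)) (map_tg Gf (graph u))"
      unfolding G1_def F_def Gf_def by (rule G1_eq[OF ne])
    have G2: "Delta_tilde (gm_mult (Delta t) u) = map_tg (\<lambda>v. if v = a then b else v) G1"
      unfolding G1_def a_def b_def by (rule G2_eq[OF ne])
    have lhs: "psi kappa (gm_mult t u) = tau kappa G1" unfolding psi_def G1_def ..
    have rhs: "psi kappa (gm_mult (Delta t) u) = tau kappa (map_tg (\<lambda>v. if v = a then b else v) G1)"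
      unfolding psi_def G2 ..
    show ?thesis
    proof (cases "a = b")
      case True
      then have "(\<lambda>v. if v = a then b else v) = (\<lambda>v. v)" by auto
      then show ?thesis using lhs rhs map_tg_ident by metis
    next
      case abne: False
      have wf: "wfg G1" unfolding G1
        by (intro wfg_union wfg_map test_graph_wfg tgt tgu)
      have fin: "finite (verts G1)" using tgt tgu unfolding G1 test_graph_def by (simp add: tg_union_def verts_map_tg)
      have Fa: "F (vin t) = a" unfolding F_def a_def by simp
      have Fb: "F (vout t) = b" unfolding F_def b_def using ne by simp
      have Gb: "Gf (vin u) = b" unfolding Gf_def b_def by simp
      have Ga: "Gf (vout u) = a" unfolding Gf_def a_def by simp
      have aV: "a \<in> verts G1" unfolding G1 using vt Fa by (force simp: tg_union_def verts_map_tg)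
      have bV: "b \<in> verts G1" unfolding G1 using vt Fb by (force simp: tg_union_def verts_map_tg)
      have zero: "tau0 kappa (quot_tg G1 P) = 0"
        if P: "partition_on (verts G1) P" "block_of P a \<noteq> block_of P b" for P
      proof -
        define f where "f = block_of P"
        define Q where "Q = quot_tg G1 P"
        have Qm: "Q = map_tg f G1" unfolding Q_def f_def quot_tg_def ..
        have "\<not> is_cactus Q"
        proof
          assume cac: "is_cactus Q"
          from cycle_arcs[OF sc ne] obtain V1 W1 V2 W2 where
            arcs: "walk (graph t) V1 W1" "hd V1 = vin t" "last V1 = vout t"
              "walk (graph t) V2 W2" "hd V2 = vout t" "last V2 = vin t" "set W1 \<inter> set W2 = {}"
            by blast
          have "(vin u, vout u) \<in> (adj (graph u))\<^sup>*" using tgu vu unfolding test_graph_def by blast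
          from rtrancl_walk[OF this] obtain V3 W3 where
            w3: "walk (graph u) V3 W3" "hd V3 = vin u" "last V3 = vout u" by blast
          let ?m = "length (edges (map_tg F (graph t)))"
          have q1: "walk Q (map f (map F V1)) W1"
            unfolding Qm G1 by (intro walk_map walk_union_l arcs(1))
          have q2: "walk Q (map f (map F V2)) W2"
            unfolding Qm G1 by (intro walk_map walk_union_l arcs(4))
          have q3: "walk Q (map f (map Gf V3)) (map ((+) ?m) W3)"
            unfolding Qm G1 by (intro walk_map walk_union_r walk_map w3(1))
          have h1: "hd (map f (map F V1)) = f a" "last (map f (map F V1)) = f b"
            using walk_hd_last_map[OF arcs(1)] arcs(2,3) Fa Fb by (simp_all add: walk_nonempty[OF arcs(1)] hd_map last_map)
          have h2: "hd (map f (map F V2)) = f b" "last (map f (map F V2)) = f a"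
            using arcs(4,5,6) Fa Fb by (simp_all add: walk_nonempty[OF arcs(4)] hd_map last_map)
          have h3: "hd (map f (map Gf V3)) = f b" "last (map f (map Gf V3)) = f a"
            using w3 Ga Gb by (simp_all add: walk_nonempty[OF w3(1)] hd_map last_map)
          have l1: "set W1 \<subseteq> {..<?m}" using walk_edges_lt[OF arcs(1)] by simp
          have l2: "set W2 \<subseteq> {..<?m}" using walk_edges_lt[OF arcs(4)] by simp
          have l3: "set (map ((+) ?m) W3) \<inter> {..<?m} = {}" by auto
          show False
            using cactus_three_walks[OF cac _ q1 h1 q2 h2 q3 h3] P(2) arcs(7) l1 l2 l3 unfolding f_def by blast
        qed
        then show ?thesis unfolding Q_def tau0_def oriented_cactus_def by simp
      qed
      have "tau kappa G1 = tau kappa (map_tg (\<lambda>v. if v = a then b else v) G1)"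
        by (rule tau_merge_eq[OF wf fin aV bV abne zero])
      then show ?thesis using lhs rhs by simp
    qed
  qed
qed

end
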